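(* Fix $\lambda>0$, $L\ge2$, an index $l\in\{1,\dots,L\}$, $\alpha_i\in\mathbb{C}$, $r_i>0$, a unit vector ${\bm\kappa}_i=(\Phi_i,\Psi_i,\Theta_i)^T\in\mathbb{R}^3$, and for each $l'\neq l$ a complex number $V_{k,l,l'}$ and a real number $r_{i,l'}$. For ${\bf q}=(x,y,z)^T\in\mathbb{R}^3$ define $$r_{i,l}({\bf q})=r_i+x\Phi_i+y\Psi_i+z\Theta_i+\frac{x^2+y^2+z^2-(x\Phi_i+y\Psi_i+z\Theta_i)^2}{2r_i},$$ $$g_{k,i,l}({\bf q})=\sum_{l'\neq l}2|\alpha_i|^2|V_{k,l,l'}|\cos\!\Big(\frac{2\pi}{\lambda}\big(r_{i,l}({\bf q})-r_{i,l'}\big)+\angle V_{k,l,l'}\Big).$$ Let $S\subseteq\mathbb{R}^3$ be a convex set with $C_{\max}:=\sup_{{\bf q}\in S}\|{\bf q}\|^2<\infty$, and let $$\delta_{k,i,l}=\frac{2\pi}{\lambda}\sum_{l'\neq l}2|\alpha_i|^2|V_{k,l,l'}|\sqrt{\frac{2}{r_i^2}+\Big(\frac{2\pi}{\lambda}\Big)^2\Big(1+\frac{C_{\max}}{r_i^2}\Big)^2}.$$ Then for all ${\bf q}_l,{\bf q}_l^{(j)}\in S$, $$g_{k,i,l}({\bf q}_l)\ge g_{k,i,l}({\bf q}_l^{(j)})+\nabla g_{k,i,l}({\bf q}_l^{(j)})^T({\bf q}_l-{\bf q}_l^{(j)})-\frac{\delta_{k,i,l}}{2}\|{\bf q}_l-{\bf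 q}_l^{(j)}\|^2,$$ $$g_{k,i,l}({\bf q}_l)\le g_{k,i,l}({\bf q}_l^{(j)})+\nabla g_{k,i,l}({\bf q}_l^{(j)})^T({\bf q}_l-{\bf q}_l^{(j)})+\frac{\delta_{k,i,l}}{2}\|{\bf q}_l-{\bf q}_l^{(j)}\|^2.$$
   Context: $\angle z$ denotes the argument (phase) of a complex number $z$, and $\nabla g_{k,i,l}$ is the gradient of $g_{k,i,l}$ with respect to ${\bf q}\in\mathbb{R}^3$. In the paper, $r_{i,l}({\bf q})$ is the second-order Taylor approximation of the distance from user $i$ to UAV $l$ located at relative position ${\bf q}$, and $g_{k,i,l}$ is the part of $|{\bf v}_k^H{\bf h}_i|^2$ depending on UAV $l$'s position, with $V_{k,l,l'}=v_{k,l}v_{k,l'}^*$. *)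

theory Defs
  imports "HOL-Analysis.Analysis"
begin

text \<open>Second-order Taylor approximation of the distance from user i to UAV l at
  relative position q = (x,y,z); kappa = (Phi, Psi, Theta).\<close>
definition r_approx :: "real \<Rightarrow> real^3 \<Rightarrow> real^3 \<Rightarrow> real" where
  "r_approx ri kappa q =
     ri + q$1 * kappa$1 + q$2 * kappa$2 + q$3 * kappa$3
     + ((q$1)\<^sup>2 + (q$2)\<^sup>2 + (q$3)\<^sup>2
        - (q$1 * kappa$1 + q$2 * kappa$2 + q$3 * kappa$3)\<^sup>2) / (2 * ri)"

text \<open>g_{k,i,l}(q); V l' = V_{k,l,l'}, rr l' = r_{i,l'}; sum over l' in {1..L} - {l}.\<close>
definition g_fun :: "real \<Rightarrow> nat \<Rightarrow> nat \<Rightarrow> complex \<Rightarrow> real \<Rightarrow> real^3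
      \<Rightarrow> (nat \<Rightarrow> complex) \<Rightarrow> (nat \<Rightarrow> real) \<Rightarrow> real^3 \<Rightarrow> real" where
  "g_fun lam L l alpha ri kappa V rr q =
     (\<Sum>l'\<in>{1..L} - {l}. 2 * (cmod alpha)\<^sup>2 * cmod (V l') *
        cos (2 * pi / lam * (r_approx ri kappa q - rr l') + Arg (V l')))"

definition delta_const :: "real \<Rightarrow> nat \<Rightarrow> nat \<Rightarrow> complex \<Rightarrow> real
      \<Rightarrow> (nat \<Rightarrow> complex) \<Rightarrow> real \<Rightarrow> real" where
  "delta_const lam L l alpha ri V Cmax =
     2 * pi / lam * (\<Sum>l'\<in>{1..L} - {l}. 2 * (cmod alpha)\<^sup>2 * cmod (V l') *
        sqrt (2 / ri\<^sup>2 + (2 * pi / lam)\<^sup>2 * (1 + Cmax / ri\<^sup>2)\<^sup>2))"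

end

theory Submission
  imports Defs
begin

lemma r_eq: "r_approx ri kappa = (\<lambda>q. ri + inner q kappa + (inner q q - (inner q kappa)^2)/(2*ri))"
  by (rule ext) (simp add: r_approx_def inner_vec_def sum_3 power2_eq_square)

definition "Dr ri kappa p d = inner d kappa + (inner p d - inner p kappa * inner d kappa)/ri"

lemma r_deriv: "ri \<noteq> 0 \<Longrightarrow> (r_approx ri kappa has_derivative Dr ri kappa p) (at p)"
  unfolding r_eq Dr_def
  apply (rule derivative_eq_intros refl | simp)+
  apply (rule ext) apply (simp add: field_simps inner_commute power2_eq_square)
  done

definition "th lam ri kappa V rr l' p = 2*pi/lam*(r_approx ri kappa p - rr l') + Arg (V l')"
definition "w alpha V l' = 2 * (cmod alpha)\<^sup>2 * cmod (V l')"
definition "G lam L l alpha ri kappa V rr p d = (\<Sum>l'\<in>{1..L} - {l}. w alpha V l' * (- sin (th lam ri kappa V rr l' p) * (2*pi/lam * Dr ri kappa p d)))"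

lemma g_deriv: "ri \<noteq> 0 \<Longrightarrow> (g_fun lam L l alpha ri kappa V rr has_derivative G lam L l alpha ri kappa V rr p) (at p)"
  unfolding g_fun_def G_def
  apply (rule has_derivative_sum)
  apply (unfold w_def th_def)
  apply (rule derivative_eq_intros r_deriv refl | simp)+
  apply (rule ext) apply (simp add: algebra_simps)
  done

lemma G_lin: "G lam L l alpha ri kappa V rr p (s *\<^sub>R d) = s * G lam L l alpha ri kappa V rr p d"
  unfolding G_def Dr_def sum_distrib_left
  by (rule sum.cong) (simp_all add: algebra_simps add_divide_distrib diff_divide_distrib)

lemma h1: "ri \<noteq> 0 \<Longrightarrow> ((\<lambda>t. g_fun lam L l alpha ri kappa V rr (qj + t *\<^sub>R d)) has_real_derivative
    G lam L l alpha ri kappa V rr (qj + t *\<^sub>R d) d) (at t)"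
proof -
  assume ri: "ri \<noteq> 0"
  have p: "((\<lambda>t. qj + t *\<^sub>R d) has_derivative (\<lambda>s. s *\<^sub>R d)) (at t)"
    by (rule derivative_eq_intros refl | simp)+
  have "((\<lambda>t. g_fun lam L l alpha ri kappa V rr (qj + t *\<^sub>R d)) has_derivative
     (\<lambda>s. G lam L l alpha ri kappa V rr (qj + t *\<^sub>R d) (s *\<^sub>R d))) (at t)"
    by (rule has_derivative_compose[OF p g_deriv[OF ri]])
  moreover have "(\<lambda>s. G lam L l alpha ri kappa V rr (qj + t *\<^sub>R d) (s *\<^sub>R d)) = (*) (G lam L l alpha ri kappa V rr (qj + t *\<^sub>R d) d)"
    by (rule ext) (simp add: G_lin)
  ultimately show ?thesis unfolding has_field_derivative_def by simp
qed

definition "h2 lam L l alpha ri kappa V rr qj d t = (\<Sum>l'\<in>{1..L} - {l}. w alpha V l' *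
   (- cos (th lam ri kappa V rr l' (qj + t *\<^sub>R d)) * (2*pi/lam * Dr ri kappa (qj + t *\<^sub>R d) d)
      * (2*pi/lam * Dr ri kappa (qj + t *\<^sub>R d) d)
    - sin (th lam ri kappa V rr l' (qj + t *\<^sub>R d)) * (2*pi/lam * ((inner d d - (inner d kappa)^2)/ri))))"

lemma thd: "ri \<noteq> 0 \<Longrightarrow> ((\<lambda>t. th lam ri kappa V rr l' (qj + t *\<^sub>R d)) has_real_derivative
    2*pi/lam * Dr ri kappa (qj + t *\<^sub>R d) d) (at t)"
proof -
  assume ri: "ri \<noteq> 0"
  have p: "((\<lambda>t. qj + t *\<^sub>R d) has_derivative (\<lambda>s. s *\<^sub>R d)) (at t)"
    by (rule derivative_eq_intros refl | simp)+
  have "((\<lambda>t. r_approx ri kappa (qj + t *\<^sub>R d)) has_derivative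
     (\<lambda>s. Dr ri kappa (qj + t *\<^sub>R d) (s *\<^sub>R d))) (at t)"
    by (rule has_derivative_compose[OF p r_deriv[OF ri]])
  moreover have "(\<lambda>s. Dr ri kappa (qj + t *\<^sub>R d) (s *\<^sub>R d)) = (*) (Dr ri kappa (qj + t *\<^sub>R d) d)"
    by (rule ext) (simp add: Dr_def algebra_simps add_divide_distrib diff_divide_distrib)
  ultimately have "((\<lambda>t. r_approx ri kappa (qj + t *\<^sub>R d)) has_real_derivative Dr ri kappa (qj + t *\<^sub>R d) d) (at t)"
    unfolding has_field_derivative_def by simp
  then have "((\<lambda>t. 2*pi/lam*(r_approx ri kappa (qj + t *\<^sub>R d) - rr l') + Arg (V l')) has_real_derivative
     2*pi/lam*(Dr ri kappa (qj + t *\<^sub>R d) d - 0) + 0) (at t)"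
    by (intro DERIV_add DERIV_cmult DERIV_diff DERIV_const)
  then show ?thesis unfolding th_def by simp
qed

lemma Ad: "ri \<noteq> 0 \<Longrightarrow> ((\<lambda>t. Dr ri kappa (qj + t *\<^sub>R d) d) has_real_derivative
    (inner d d - (inner d kappa)^2)/ri) (at t)"
proof -
  assume ri: "ri \<noteq> 0"
  have eq: "(\<lambda>t. Dr ri kappa (qj + t *\<^sub>R d) d) = (\<lambda>t. Dr ri kappa qj d + t * ((inner d d - (inner d kappa)^2)/ri))"
    by (rule ext) (simp add: Dr_def inner_add_left inner_scaleR_left field_simps power2_eq_square ri)
  have "((\<lambda>t. Dr ri kappa qj d + t * ((inner d d - (inner d kappa)^2)/ri)) has_real_derivative
     0 + 1 * ((inner d d - (inner d kappa)^2)/ri)) (at t)"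
    by (intro DERIV_add DERIV_const DERIV_cmult_right DERIV_ident)
  then show ?thesis unfolding eq by simp
qed

lemma h2: "ri \<noteq> 0 \<Longrightarrow> ((\<lambda>t. G lam L l alpha ri kappa V rr (qj + t *\<^sub>R d) d) has_real_derivative
    h2 lam L l alpha ri kappa V rr qj d t) (at t)"
proof -
  assume ri: "ri \<noteq> 0"
  have "((\<lambda>t. G lam L l alpha ri kappa V rr (qj + t *\<^sub>R d) d) has_real_derivative
    (\<Sum>l'\<in>{1..L} - {l}. w alpha V l' * (- (cos (th lam ri kappa V rr l' (qj + t *\<^sub>R d)) * (2*pi/lam * Dr ri kappa (qj + t *\<^sub>R d) d)) * (2*pi/lam * Dr ri kappa (qj + t *\<^sub>R d) d)
       + (2*pi/lam * ((inner d d - (inner d kappa)^2)/ri)) * (- sin (th lam ri kappa V rr l' (qj + t *\<^sub>R d)))))) (at t)"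
    unfolding G_def
    by (intro DERIV_sum DERIV_cmult DERIV_mult DERIV_minus DERIV_fun_sin thd Ad ri)
  then show ?thesis unfolding h2_def
    by (rule DERIV_cong, intro sum.cong refl) (simp add: algebra_simps divide_inverse)
qed


lemma A_bound:
  assumes ri: "ri > 0" and k: "norm kappa = 1" and pC: "inner p p \<le> C"
  shows "(Dr ri kappa p d)^2 \<le> (1 + C/ri^2) * inner d d"
proof -
  define v where "v = kappa + (1/ri) *\<^sub>R (p - (inner p kappa) *\<^sub>R kappa)"
  have kk: "inner kappa kappa = 1" using k by (simp add: dot_square_norm)
  have A: "Dr ri kappa p d = inner v d"
    unfolding v_def Dr_def inner_add_left inner_diff_left inner_scaleR_left using ri by (simp add: field_simps inner_commute)
  have vv: "inner v v = 1 + (inner p p - (inner p kappa)^2)/ri^2"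
    unfolding v_def using ri kk
    by (simp add: inner_add_left inner_add_right inner_diff_left inner_diff_right field_simps inner_commute power2_eq_square)
  have "(inner v d)^2 \<le> inner v v * inner d d" by (rule Cauchy_Schwarz_ineq)
  also have "\<dots> \<le> (1 + C/ri^2) * inner d d"
  proof (rule mult_right_mono)
    have "inner p p - (inner p kappa)^2 \<le> C" using pC zero_le_power2[of "inner p kappa"] by linarith
    then have "(inner p p - (inner p kappa)^2)/ri^2 \<le> C/ri^2" by (rule divide_right_mono) simp
    then show "inner v v \<le> 1 + C/ri^2" unfolding vv by simp
  qed simp
  finally show ?thesis using A by simp
qed

lemma B_bounds:
  assumes ri: "ri > 0" and k: "norm kappa = 1"
  shows "0 \<le> (inner d d - (inner d kappa)^2)/ri" "(inner d d - (inner d kappa)^2)/ri \<le> inner d d / ri"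
proof -
  have kk: "inner kappa kappa = 1" using k by (simp add: dot_square_norm)
  have "(inner d kappa)^2 \<le> inner d d * inner kappa kappa" by (rule Cauchy_Schwarz_ineq)
  then have "(inner d kappa)^2 \<le> inner d d" using kk by simp
  then show "0 \<le> (inner d d - (inner d kappa)^2)/ri" using ri by simp
  show "(inner d d - (inner d kappa)^2)/ri \<le> inner d d / ri" using ri by (simp add: divide_right_mono)
qed

lemma trig_aux:
  fixes a b s c :: real assumes h: "s^2 + c^2 = 1"
  shows "(- c * a - s * b)^2 + (a * s - b * c)^2 = a^2 + b^2"
proof -
  have "(- c * a - s * b)^2 + (a * s - b * c)^2 = (a^2 + b^2) * (s^2 + c^2)"
    by (simp add: algebra_simps power2_eq_square)
  then show ?thesis using h by simp
qed

lemma trig_bound: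
  fixes a b x :: real
  shows "(- cos x * a - sin x * b)^2 \<le> a^2 + b^2"
proof -
  have "(- cos x * a - sin x * b)^2 + (a * sin x - b * cos x)^2 = a^2 + b^2"
    by (rule trig_aux) simp
  moreover have "0 \<le> (a * sin x - b * cos x)^2" by simp
  ultimately show ?thesis by linarith
qed


lemma term_bound:
  fixes c :: real
  assumes ri: "ri > 0" and c: "c \<ge> 0" and k: "norm kappa = 1" and pC: "inner p p \<le> C"
  shows "\<bar>- cos x * (c * Dr ri kappa p d) * (c * Dr ri kappa p d) - sin x * (c * ((inner d d - (inner d kappa)^2)/ri))\<bar>
     \<le> c * inner d d * sqrt (2 / ri\<^sup>2 + c\<^sup>2 * (1 + C / ri\<^sup>2)\<^sup>2)"
proof -
  define A where "A = Dr ri kappa p d"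
  define B where "B = (inner d d - (inner d kappa)^2)/ri"
  define nd where "nd = inner d d"
  define a where "a = c^2 * A^2"
  define b where "b = c * B"
  have nd0: "nd \<ge> 0" unfolding nd_def by simp
  have C0: "C \<ge> 0" using pC inner_ge_zero[of p] by linarith
  have A2: "A^2 \<le> (1 + C/ri^2) * nd" unfolding A_def nd_def by (rule A_bound[OF ri k pC])
  have B0: "0 \<le> B" and B1: "B \<le> nd / ri" unfolding B_def nd_def using B_bounds[OF ri k] by auto
  have X: "- cos x * (c * A) * (c * A) - sin x * (c * B) = - cos x * a - sin x * b"
    unfolding a_def b_def by (simp add: power2_eq_square algebra_simps)
  have a0: "0 \<le> a" unfolding a_def by simp
  have a1: "a \<le> c^2 * ((1 + C/ri^2) * nd)" unfolding a_def using A2 by (simp add: mult_left_mono)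
  have "a^2 \<le> (c^2 * ((1 + C/ri^2) * nd))^2" by (rule power_mono[OF a1 a0])
  also have "\<dots> = c^2 * nd^2 * (c^2 * (1 + C/ri^2)^2)" by (simp add: power_mult_distrib power2_eq_square)
  finally have a2: "a^2 \<le> c^2 * nd^2 * (c^2 * (1 + C/ri^2)^2)" .
  have "b^2 = c^2 * B^2" unfolding b_def by (simp add: power_mult_distrib)
  also have "\<dots> \<le> c^2 * (nd/ri)^2" using B0 B1 by (intro mult_left_mono power_mono) auto
  also have "\<dots> \<le> c^2 * nd^2 * (2 / ri^2)"
    using ri by (simp add: power_divide mult_left_mono divide_right_mono)
  finally have b2: "b^2 \<le> c^2 * nd^2 * (2 / ri^2)" .
  have "(- cos x * a - sin x * b)^2 \<le> (c * nd)^2 * (2 / ri\<^sup>2 + c\<^sup>2 * (1 + C / ri\<^sup>2)\<^sup>2)"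
    using trig_bound[of x a b] a2 b2 by (simp add: algebra_simps power_mult_distrib)
  then have "sqrt ((- cos x * a - sin x * b)^2) \<le> sqrt ((c * nd)^2 * (2 / ri\<^sup>2 + c\<^sup>2 * (1 + C / ri\<^sup>2)\<^sup>2))"
    by (rule real_sqrt_le_mono)
  also have "\<dots> = c * nd * sqrt (2 / ri\<^sup>2 + c\<^sup>2 * (1 + C / ri\<^sup>2)\<^sup>2)"
    using c nd0 by (simp add: real_sqrt_mult)
  finally show ?thesis using X unfolding A_def B_def nd_def by simp
qed


lemma h2_bound:
  assumes ri: "ri > 0" and lam: "lam > 0" and k: "norm kappa = 1"
    and pC: "inner (qj + t *\<^sub>R d) (qj + t *\<^sub>R d) \<le> C"
  shows "\<bar>h2 lam L l alpha ri kappa V rr qj d t\<bar> \<le> delta_const lam L l alpha ri V C * inner d d"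
proof -
  let ?c = "2*pi/lam"
  let ?K = "sqrt (2 / ri\<^sup>2 + ?c\<^sup>2 * (1 + C / ri\<^sup>2)\<^sup>2)"
  have c0: "?c \<ge> 0" using lam by simp
  have "\<bar>h2 lam L l alpha ri kappa V rr qj d t\<bar> \<le> (\<Sum>l'\<in>{1..L} - {l}. w alpha V l' * (?c * inner d d * ?K))"
    unfolding h2_def
  proof (rule order_trans[OF sum_abs], rule sum_mono)
    fix l' assume "l' \<in> {1..L} - {l}"
    have w0: "w alpha V l' \<ge> 0" unfolding w_def by simp
    show "\<bar>w alpha V l' *
          (- cos (th lam ri kappa V rr l' (qj + t *\<^sub>R d)) * (2 * pi / lam * Dr ri kappa (qj + t *\<^sub>R d) d) *
           (2 * pi / lam * Dr ri kappa (qj + t *\<^sub>R d) d) -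
           sin (th lam ri kappa V rr l' (qj + t *\<^sub>R d)) * (2 * pi / lam * ((d \<bullet> d - (d \<bullet> kappa)\<^sup>2) / ri)))\<bar>
         \<le> w alpha V l' * (?c * inner d d * ?K)"
      unfolding abs_mult abs_of_nonneg[OF w0]
      by (intro mult_left_mono term_bound[OF ri c0 k pC] w0)
  qed
  also have "\<dots> = delta_const lam L l alpha ri V C * inner d d"
    unfolding delta_const_def w_def sum_distrib_left sum_distrib_right
    by (rule sum.cong) (simp_all add: algebra_simps)
  finally show ?thesis .
qed

theorem lemma1:
  fixes lam ri :: real and L l :: nat and alpha :: complex and kappa :: "real^3"
    and V :: "nat \<Rightarrow> complex" and rr :: "nat \<Rightarrow> real" and S :: "(real^3) set"
    and q qj :: "real^3"
  assumes "lam > 0" and "L \<ge> 2" and "l \<in> {1..L}" and "ri > 0" and "norm kappa = 1"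
    and "convex S" and "bdd_above ((\<lambda>p. (norm p)\<^sup>2) ` S)"
    and "q \<in> S" and "qj \<in> S"
  shows
   "g_fun lam L l alpha ri kappa V rr q \<ge>
      g_fun lam L l alpha ri kappa V rr qj
      + frechet_derivative (g_fun lam L l alpha ri kappa V rr) (at qj) (q - qj)
      - delta_const lam L l alpha ri V (SUP p\<in>S. (norm p)\<^sup>2) / 2 * (norm (q - qj))\<^sup>2
    \<and> g_fun lam L l alpha ri kappa V rr q \<le>
      g_fun lam L l alpha ri kappa V rr qj
      + frechet_derivative (g_fun lam L l alpha ri kappa V rr) (at qj) (q - qj)
      + delta_const lam L l alpha ri V (SUP p\<in>S. (norm p)\<^sup>2) / 2 * (norm (q - qj))\<^sup>2"
proof -
  have ri: "ri > 0" and lam: "lam > 0" and k: "norm kappa = 1" using assms by auto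
  have ri0: "ri \<noteq> 0" using ri by simp
  define d where "d = q - qj"
  define C where "C = (SUP p\<in>S. (norm p)\<^sup>2)"
  define g where "g = g_fun lam L l alpha ri kappa V rr"
  define h where "h = (\<lambda>t. g (qj + t *\<^sub>R d))"
  define diff where "diff = (\<lambda>m::nat. if m = 0 then h else if m = 1 then (\<lambda>t. G lam L l alpha ri kappa V rr (qj + t *\<^sub>R d) d)
     else h2 lam L l alpha ri kappa V rr qj d)"
  have fd: "frechet_derivative g (at qj) = G lam L l alpha ri kappa V rr qj"
    unfolding g_def using frechet_derivative_at[OF g_deriv[OF ri0]] by metis
  have D: "\<forall>m t. m < 2 \<and> 0 \<le> t \<and> t \<le> 1 \<longrightarrow> DERIV (diff m) t :> diff (Suc m) t"
  proof (intro allI impI)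
    fix m :: nat and t :: real assume "m < 2 \<and> 0 \<le> t \<and> t \<le> 1"
    then have "m = 0 \<or> m = 1" by auto
    then show "DERIV (diff m) t :> diff (Suc m) t"
      using h1[OF ri0, of lam L l alpha kappa V rr qj d t] h2[OF ri0, of lam L l alpha kappa V rr qj d t]
      unfolding diff_def h_def g_def by auto
  qed
  obtain t where t: "0 < t" "t < 1"
    and T: "h 1 = (\<Sum>m<2. diff m 0 / fact m * (1 - 0)^m) + diff 2 t / fact 2 * (1 - 0)^2"
    using Taylor_up[of 2 diff h 0 1 0] D unfolding diff_def by auto
  have "qj + t *\<^sub>R d = (1 - t) *\<^sub>R qj + t *\<^sub>R q" unfolding d_def by (simp add: algebra_simps)
  also have "\<dots> \<in> S" using assms(6,8,9) t unfolding convex_alt by auto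
  finally have pS: "qj + t *\<^sub>R d \<in> S" .
  have pC: "inner (qj + t *\<^sub>R d) (qj + t *\<^sub>R d) \<le> C"
    unfolding C_def power2_norm_eq_inner[symmetric] using assms(7) pS by (rule cSUP_upper2) simp_all
  have hb: "\<bar>h2 lam L l alpha ri kappa V rr qj d t\<bar> \<le> delta_const lam L l alpha ri V C * (norm d)^2"
    using h2_bound[OF ri lam k pC] by (simp add: power2_norm_eq_inner)
  have T2: "g q = g qj + frechet_derivative g (at qj) d + h2 lam L l alpha ri kappa V rr qj d t / 2"
    using T unfolding diff_def h_def fd d_def by (simp add: numeral_2_eq_2)
  show ?thesis
    using T2 hb unfolding g_def C_def d_def by (auto simp: abs_le_iff)
qed

end
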